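(* Let integers $n \geq 0$, $m \geq 2$ and $k \geq 1$ be given, let $q=(q_1,\dots,q_m)$ be a probability distribution on $\{1,\dots,m\}$, and let $j \in \{1,\dots,m-1\}$. Define $q'$ by $q'_\ell = q_\ell$ for all $\ell \notin \{j,j+1\}$ and \[ q'_j = q_j + q_{j+1} - \|(q_j,q_{j+1})\|_k, \qquad q'_{j+1} = \|(q_j,q_{j+1})\|_k, \] where $\|(a,b)\|_k = (a^k+b^k)^{1/k}$. For a distribution $r$ on $\{1,\dots,m\}$ and $i \in \{1,\dots,m\}$, let $M^{r}_{i}$ denote the maximum load of any bin in $\{i,\dots,m\}$ when $n$ balls are thrown independently into the $m$ bins according to $r$. Then \[ \Pr[M^{q}_{j} < k] \leq \Pr[M^{q'}_{j+1} < k]. \]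
   Context: The load of a bin is the number of balls that landed in it. *)

theory Defs
  imports "HOL-Library.FuncSet" Complex_Main
begin

text \<open>An outcome of throwing n balls into bins 1..m is a map from balls {0..<n} to bins.\<close>

definition load :: "nat \<Rightarrow> (nat \<Rightarrow> nat) \<Rightarrow> nat \<Rightarrow> nat" where
  "load n f b = card {t \<in> {..<n}. f t = b}"

definition max_load_from :: "nat \<Rightarrow> nat \<Rightarrow> (nat \<Rightarrow> nat) \<Rightarrow> nat \<Rightarrow> nat" where
  "max_load_from n m f i = Max (load n f ` {i..m})"

definition balls_prob :: "nat \<Rightarrow> nat \<Rightarrow> (nat \<Rightarrow> real) \<Rightarrow> ((nat \<Rightarrow> nat) \<Rightarrow> bool) \<Rightarrow> real" where
  "balls_prob n m r P = (\<Sum>f \<in> {..<n} \<rightarrow>\<^sub>E {1..m}. if P f then (\<Prod>t<n. r (f t)) else 0)"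

definition knorm :: "nat \<Rightarrow> real \<Rightarrow> real \<Rightarrow> real" where
  "knorm k a b = root k (a ^ k + b ^ k)"

definition merge_dist :: "nat \<Rightarrow> nat \<Rightarrow> (nat \<Rightarrow> real) \<Rightarrow> nat \<Rightarrow> real" where
  "merge_dist k j q = (\<lambda>l. if l = j then q j + q (j+1) - knorm k (q j) (q (j+1))
                          else if l = j + 1 then knorm k (q j) (q (j+1))
                          else q l)"

end

theory Submission
  imports Defs
begin



definition bs :: "nat \<Rightarrow> real \<Rightarrow> real \<Rightarrow> (nat \<Rightarrow> bool) \<Rightarrow> real" where
 "bs s x y P = (\<Sum>i\<le>s. if P i then of_nat (s choose i) * x^i * y^(s-i) else 0)"

lemma bs_true: "bs s x y (\<lambda>_. True) = (x+y)^s"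
  by (simp add: bs_def binomial_ring)

lemma bs_Suc: "bs (Suc s) x y P = x * bs s x y (\<lambda>i. P (Suc i)) + y * bs s x y P"
proof -
  define u where "u i = (if P i then of_nat (s choose i) * x^i * y^(Suc s - i) else 0)" for i
  have 1: "y * bs s x y P = (\<Sum>i\<le>s. u i)"
    unfolding bs_def u_def sum_distrib_left
    by (rule sum.cong) (auto simp: Suc_diff_le)
  have "(\<Sum>i\<le>s. u i) = (\<Sum>i\<le>Suc s. u i)" by (simp add: u_def)
  also have "\<dots> = u 0 + (\<Sum>i\<le>s. u (Suc i))" by (rule sum.atMost_Suc_shift)
  finally have 2: "y * bs s x y P = u 0 + (\<Sum>i\<le>s. u (Suc i))" using 1 by simp
  have 3: "x * bs s x y (\<lambda>i. P (Suc i)) = (\<Sum>i\<le>s. if P (Suc i) then of_nat (s choose i) * x^(Suc i) * y^(s-i) else 0)"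
    unfolding bs_def sum_distrib_left by (rule sum.cong) auto
  have "bs (Suc s) x y P = (if P 0 then y^(Suc s) else 0) + (\<Sum>i\<le>s. if P (Suc i) then of_nat (Suc s choose Suc i) * x^(Suc i) * y^(s-i) else 0)"
    unfolding bs_def by (subst sum.atMost_Suc_shift) (simp, rule sum.cong, auto)
  also have "(\<Sum>i\<le>s. if P (Suc i) then of_nat (Suc s choose Suc i) * x^(Suc i) * y^(s-i) else 0)
     = (\<Sum>i\<le>s. if P (Suc i) then of_nat (s choose i) * x^(Suc i) * y^(s-i) else 0) + (\<Sum>i\<le>s. u (Suc i))"
    unfolding sum.distrib[symmetric] u_def by (rule sum.cong) (auto simp: algebra_simps)
  finally show ?thesis unfolding 2 3 by (simp add: u_def)
qed

primrec Nr :: "nat \<Rightarrow> real \<Rightarrow> real \<Rightarrow> nat \<Rightarrow> real" where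
  "Nr k T y 0 = 0"
| "Nr k T y (Suc s) = T * Nr k T y s + (if k \<le> Suc s then of_nat (s choose (k-1)) * y^(Suc s - k) else 0)"

lemma Nr_nonneg: "0 \<le> T \<Longrightarrow> 0 \<le> y \<Longrightarrow> 0 \<le> Nr k T y s"
  by (induction s) auto

lemma Nr_mono: "0 \<le> T \<Longrightarrow> 0 \<le> y \<Longrightarrow> y \<le> y' \<Longrightarrow> Nr k T y s \<le> Nr k T y' s"
proof (induction s)
  case (Suc s)
  have "T * Nr k T y s \<le> T * Nr k T y' s" using Suc by (simp add: mult_left_mono)
  moreover have "y^(Suc s - k) \<le> y'^(Suc s - k)" using Suc by (simp add: power_mono)
  ultimately show ?case by (auto intro!: add_mono mult_left_mono)
qed simp

lemma bs_delta: "bs s x y (\<lambda>i. i = p) = (if p \<le> s then of_nat (s choose p) * x^p * y^(s-p) else 0)"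
  unfolding bs_def by (simp add: sum.delta' cong: if_cong)

lemma bs_add: "(\<And>i. i \<le> s \<Longrightarrow> P i = (Q i \<or> R i)) \<Longrightarrow> (\<And>i. i \<le> s \<Longrightarrow> \<not> (Q i \<and> R i)) \<Longrightarrow>
   bs s x y P = bs s x y Q + bs s x y R"
  unfolding bs_def sum.distrib[symmetric] by (rule sum.cong) auto

lemma g_eq: "k \<ge> 1 \<Longrightarrow> bs s x y (\<lambda>i. k \<le> i) = x^k * Nr k (x+y) y s"
proof (induction s)
  case 0
  then show ?case by (simp add: bs_def)
next
  case (Suc s)
  have "bs s x y (\<lambda>i. k \<le> Suc i) = bs s x y (\<lambda>i. k \<le> i) + bs s x y (\<lambda>i. i = k - 1)"
    using Suc.prems by (intro bs_add) auto
  then have "bs (Suc s) x y (\<lambda>i. k \<le> i) = x * (bs s x y (\<lambda>i. k \<le> i) + bs s x y (\<lambda>i. i = k - 1)) + y * bs s x y (\<lambda>i. k \<le> i)"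
    by (simp add: bs_Suc)
  also have "\<dots> = (x + y) * (x^k * Nr k (x+y) y s) + x * bs s x y (\<lambda>i. i = k - 1)"
    using Suc by (simp add: algebra_simps)
  also have "x * bs s x y (\<lambda>i. i = k - 1) = x^k * (if k \<le> Suc s then of_nat (s choose (k-1)) * y^(Suc s - k) else 0)"
  proof -
    have e: "x * x^(k-1) = x^k" using Suc.prems by (metis Suc_diff_le diff_Suc_1 le_add_diff_inverse2 plus_1_eq_Suc power_Suc)
    have "Suc s - k = s - (k - 1)" using Suc.prems by simp
    then show ?thesis unfolding bs_delta using Suc.prems e
      by (auto simp: algebra_simps)
  qed
  finally show ?case by (simp add: algebra_simps)
qed

lemma bs_rev: "bs s x y (\<lambda>i. P (s - i)) = bs s y x P"
proof -
  have "bs s x y (\<lambda>i. P (s - i)) = (\<Sum>i\<le>s. (\<lambda>i. if P i then of_nat (s choose i) * y^i * x^(s-i) else 0) (s - i))"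
    unfolding bs_def by (rule sum.cong) (auto simp: binomial_symmetric[symmetric] algebra_simps)
  also have "\<dots> = bs s y x P" unfolding bs_def
    by (rule sum.reindex_bij_witness[where i="\<lambda>i. s - i" and j="\<lambda>i. s - i"]) auto
  finally show ?thesis .
qed

lemma bs_nonneg: "0 \<le> x \<Longrightarrow> 0 \<le> y \<Longrightarrow> 0 \<le> bs s x y P"
  unfolding bs_def by (rule sum_nonneg) auto

lemma key:
  fixes a b c d :: real
  assumes "k \<ge> 1" "0 \<le> a" "0 \<le> b" "0 \<le> d" "c + d = a + b" "c^k = a^k + b^k" "d \<le> a" "d \<le> b"
  shows "bs s b a (\<lambda>i. i < k \<and> s - i < k) \<le> bs s c d (\<lambda>i. i < k)"
proof (cases "2 * k \<le> s + 1")
  case True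
  have "bs s b a (\<lambda>i. i < k \<and> s - i < k) = 0"
    unfolding bs_def using True by (intro sum.neutral) auto
  moreover have "0 \<le> c" using assms by linarith
  ultimately show ?thesis using bs_nonneg assms by simp
next
  case False
  have c0: "0 \<le> c" using assms by linarith
  have "(b + a)^s = bs s b a (\<lambda>i. i < k \<and> s - i < k) + bs s b a (\<lambda>i. k \<le> i \<or> k \<le> s - i)"
    unfolding bs_true[symmetric] by (rule bs_add) auto
  also have "bs s b a (\<lambda>i. k \<le> i \<or> k \<le> s - i) = bs s b a (\<lambda>i. k \<le> i) + bs s b a (\<lambda>i. k \<le> s - i)"
    using False by (intro bs_add) auto
  also have "bs s b a (\<lambda>i. k \<le> s - i) = bs s a b (\<lambda>i. k \<le> i)" by (rule bs_rev)
  finally have L: "bs s b a (\<lambda>i. i < k \<and> s - i < k) = (a+b)^s - b^k * Nr k (a+b) a s - a^k * Nr k (a+b) b s"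
    using g_eq[OF assms(1)] by (simp add: algebra_simps)
  have "(c + d)^s = bs s c d (\<lambda>i. i < k) + bs s c d (\<lambda>i. k \<le> i)"
    unfolding bs_true[symmetric] by (rule bs_add) auto
  then have R: "bs s c d (\<lambda>i. i < k) = (a+b)^s - c^k * Nr k (a+b) d s"
    using g_eq[OF assms(1)] assms(5) by simp
  have "c^k * Nr k (a+b) d s = a^k * Nr k (a+b) d s + b^k * Nr k (a+b) d s"
    using assms(6) by (simp add: algebra_simps)
  also have "\<dots> \<le> a^k * Nr k (a+b) b s + b^k * Nr k (a+b) a s"
    using assms by (intro add_mono mult_left_mono Nr_mono) auto
  finally show ?thesis unfolding L R by simp
qed




lemma pow_card_sum:
  fixes h :: "nat \<Rightarrow> real"
  assumes "finite S"
  shows "(\<Sum>T\<in>Pow S. h (card T)) = (\<Sum>i\<le>card S. of_nat (card S choose i) * h i)"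
proof -
  have "(\<Sum>T\<in>Pow S. h (card T)) = (\<Sum>i\<le>card S. \<Sum>T\<in>{T\<in>Pow S. card T = i}. h (card T))"
    using assms by (intro sum.group[symmetric]) (auto intro: card_mono)
  also have "\<dots> = (\<Sum>i\<le>card S. of_nat (card S choose i) * h i)"
  proof (rule sum.cong)
    fix i assume "i \<in> {..card S}"
    have "{T\<in>Pow S. card T = i} = {T. T \<subseteq> S \<and> card T = i}" by auto
    then have "card {T\<in>Pow S. card T = i} = card S choose i" using n_subsets[OF assms] by simp
    moreover have "(\<Sum>T\<in>{T\<in>Pow S. card T = i}. h (card T)) = (\<Sum>T\<in>{T\<in>Pow S. card T = i}. h i)"
      by (rule sum.cong) auto
    ultimately show "(\<Sum>T\<in>{T\<in>Pow S. card T = i}. h (card T)) = of_nat (card S choose i) * h i"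
      by simp
  qed simp
  finally show ?thesis .
qed

lemma decomp:
  fixes F :: "(nat \<Rightarrow> nat) \<Rightarrow> real"
  assumes "j + 1 \<in> B" "j \<in> B" "finite B"
  shows "(\<Sum>f\<in>{..<n} \<rightarrow>\<^sub>E B. F f) =
    (\<Sum>g\<in>{..<n} \<rightarrow>\<^sub>E (B - {j+1}). \<Sum>T\<in>Pow {t\<in>{..<n}. g t = j}. F (\<lambda>t. if t \<in> T then j+1 else g t))"
proof -
  define G where "G = {..<n} \<rightarrow>\<^sub>E (B - {j+1})"
  define \<Phi> where "\<Phi> = (\<lambda>(g::nat\<Rightarrow>nat, T). \<lambda>t. if t \<in> T then j+1 else g t)"
  define \<Psi> where "\<Psi> = (\<lambda>f::nat\<Rightarrow>nat. (\<lambda>t. if t \<in> {..<n} \<and> f t = j+1 then j else f t, {t\<in>{..<n}. f t = j+1}))"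
  have fin: "finite G" unfolding G_def using assms by (intro finite_PiE) auto
  have "(\<Sum>g\<in>G. \<Sum>T\<in>Pow {t\<in>{..<n}. g t = j}. F (\<lambda>t. if t \<in> T then j+1 else g t))
     = (\<Sum>p\<in>Sigma G (\<lambda>g. Pow {t\<in>{..<n}. g t = j}). F (\<Phi> p))"
    unfolding \<Phi>_def using fin by (subst sum.Sigma) (auto simp: split_beta)
  also have "\<dots> = (\<Sum>f\<in>{..<n} \<rightarrow>\<^sub>E B. F f)"
  proof (rule sum.reindex_bij_betw, rule bij_betw_byWitness[where f'=\<Psi>])
    show "\<forall>p\<in>Sigma G (\<lambda>g. Pow {t\<in>{..<n}. g t = j}). \<Psi> (\<Phi> p) = p"
      unfolding G_def \<Phi>_def \<Psi>_def by (fastforce simp: PiE_def extensional_def)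
    show "\<forall>f\<in>{..<n} \<rightarrow>\<^sub>E B. \<Phi> (\<Psi> f) = f"
      unfolding \<Phi>_def \<Psi>_def by (fastforce simp: PiE_def extensional_def)
    show "\<Phi> ` Sigma G (\<lambda>g. Pow {t\<in>{..<n}. g t = j}) \<subseteq> {..<n} \<rightarrow>\<^sub>E B"
    proof (rule image_subsetI)
      fix p assume "p \<in> Sigma G (\<lambda>g. Pow {t\<in>{..<n}. g t = j})"
      then obtain g T where p: "p = (g, T)" "g \<in> {..<n} \<rightarrow>\<^sub>E (B - {j+1})" "T \<subseteq> {t\<in>{..<n}. g t = j}"
        unfolding G_def by auto
      show "\<Phi> p \<in> {..<n} \<rightarrow>\<^sub>E B"
        unfolding PiE_iff \<Phi>_def p(1) using p(2,3) assms(1) by (auto simp: PiE_iff extensional_def)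
    qed
    show "\<Psi> ` ({..<n} \<rightarrow>\<^sub>E B) \<subseteq> Sigma G (\<lambda>g. Pow {t\<in>{..<n}. g t = j})"
    proof (rule image_subsetI)
      fix f assume f: "f \<in> {..<n} \<rightarrow>\<^sub>E B"
      show "\<Psi> f \<in> Sigma G (\<lambda>g. Pow {t\<in>{..<n}. g t = j})"
        unfolding G_def \<Psi>_def using f assms by (auto simp: PiE_iff extensional_def)
    qed
  qed
  finally show ?thesis unfolding G_def by simp
qed




lemma mlf_less: "i \<le> m \<Longrightarrow> (max_load_from n m f i < k) = (\<forall>b\<in>{i..m}. load n f b < k)"
  unfolding max_load_from_def by (subst Max_less_iff) auto

lemma fiber_facts:
  fixes r :: "nat \<Rightarrow> real"
  assumes g: "g \<in> {..<n} \<rightarrow>\<^sub>E (B - {j+1})" and T: "T \<subseteq> {t\<in>{..<n}. g t = j}"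
  defines "S \<equiv> {t\<in>{..<n}. g t = j}"
  defines "f \<equiv> (\<lambda>t. if t \<in> T then j+1 else g t)"
  shows "(\<Prod>t<n. r (f t)) = (\<Prod>t\<in>{..<n} - S. r (g t)) * r j ^ (card S - card T) * r (j+1) ^ card T"
    and "load n f (j+1) = card T"
    and "load n f j = card S - card T"
    and "b \<noteq> j \<Longrightarrow> b \<noteq> j+1 \<Longrightarrow> load n f b = load n g b"
proof -
  have TS: "T \<subseteq> S" "S \<subseteq> {..<n}" using T unfolding S_def by auto
  have finS: "finite S" "finite T" using TS by (auto intro: finite_subset)
  have gne: "\<And>t. t < n \<Longrightarrow> g t \<noteq> j+1" using g by (auto simp: PiE_iff)
  have "(\<Prod>t<n. r (f t)) = (\<Prod>t\<in>{..<n} - S. r (f t)) * (\<Prod>t\<in>S. r (f t))"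
    using TS by (subst prod.subset_diff[of S]) auto
  also have "(\<Prod>t\<in>S. r (f t)) = (\<Prod>t\<in>S - T. r (f t)) * (\<Prod>t\<in>T. r (f t))"
    using TS finS by (subst prod.subset_diff[of T]) auto
  also have "(\<Prod>t\<in>{..<n} - S. r (f t)) = (\<Prod>t\<in>{..<n} - S. r (g t))"
    using TS by (intro prod.cong) (auto simp: f_def)
  also have "(\<Prod>t\<in>S - T. r (f t)) = (\<Prod>t\<in>S - T. r j)"
    by (intro prod.cong) (auto simp: f_def S_def)
  also have "(\<Prod>t\<in>T. r (f t)) = (\<Prod>t\<in>T. r (j+1))"
    by (intro prod.cong) (auto simp: f_def)
  finally show "(\<Prod>t<n. r (f t)) = (\<Prod>t\<in>{..<n} - S. r (g t)) * r j ^ (card S - card T) * r (j+1) ^ card T"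
    using TS finS by (simp add: card_Diff_subset mult.assoc)
  have "{t \<in> {..<n}. f t = j+1} = T" using TS gne by (auto simp: f_def)
  then show "load n f (j+1) = card T" by (simp add: load_def)
  have "{t \<in> {..<n}. f t = j} = S - T" using TS by (auto simp: f_def S_def)
  then show "load n f j = card S - card T" using TS finS by (simp add: load_def card_Diff_subset)
  assume "b \<noteq> j" "b \<noteq> j+1"
  then have "{t \<in> {..<n}. f t = b} = {t \<in> {..<n}. g t = b}" using TS by (auto simp: f_def S_def)
  then show "load n f b = load n g b" by (simp add: load_def)
qed

lemma knorm_facts:
  fixes a b :: real and k :: nat
  assumes "k \<ge> 1" "0 \<le> a" "0 \<le> b"
  shows "knorm k a b ^ k = a^k + b^k" "a \<le> knorm k a b" "b \<le> knorm k a b" "knorm k a b \<le> a + b"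
proof -
  have k0: "0 < k" using assms by simp
  show "knorm k a b ^ k = a^k + b^k" unfolding knorm_def using k0 assms by (simp add: real_root_pow_pos2)
  have "root k (a^k) \<le> knorm k a b" unfolding knorm_def using k0 assms by (simp add: real_root_le_iff)
  then show "a \<le> knorm k a b" using k0 assms by (simp add: real_root_power_cancel)
  have "root k (b^k) \<le> knorm k a b" unfolding knorm_def using k0 assms by (simp add: real_root_le_iff)
  then show "b \<le> knorm k a b" using k0 assms by (simp add: real_root_power_cancel)
  have pw: "a^p + b^p \<le> (a+b)^p" if "p \<ge> 1" for p :: nat
    using that
  proof (induction p rule: dec_induct)
    case base then show ?case by simp
  next
    case (step p)
    have "a^Suc p + b^Suc p \<le> (a+b) * (a^p + b^p)"
      using assms by (simp add: algebra_simps)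
    also have "\<dots> \<le> (a+b) * (a+b)^p" using step assms by (intro mult_left_mono) auto
    finally show ?case by simp
  qed
  have "knorm k a b \<le> root k ((a+b)^k)" unfolding knorm_def using k0 pw[OF assms(1)] by (simp add: real_root_le_iff)
  then show "knorm k a b \<le> a + b" using k0 assms by (simp add: real_root_power_cancel)
qed




theorem lemma12:
  fixes n m k j :: nat and q :: "nat \<Rightarrow> real"
  assumes "m \<ge> 2" and "k \<ge> 1"
    and "\<forall>l \<in> {1..m}. q l \<ge> 0" and "(\<Sum>l=1..m. q l) = 1"
    and "j \<in> {1..m-1}"
  shows "balls_prob n m q (\<lambda>f. max_load_from n m f j < k)
         \<le> balls_prob n m (merge_dist k j q) (\<lambda>f. max_load_from n m f (j+1) < k)"
proof -
  define a where "a = q j"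
  define b where "b = q (j+1)"
  define c where "c = knorm k a b"
  define d where "d = a + b - c"
  define q' where "q' = merge_dist k j q"
  have j1: "1 \<le> j" "j + 1 \<le> m" using assms(5) by auto
  have a0: "0 \<le> a" "0 \<le> b" using assms(3) j1 unfolding a_def b_def by auto
  note kf = knorm_facts[OF assms(2) a0, folded c_def]
  have d0: "0 \<le> d" "d \<le> a" "d \<le> b" "c + d = a + b" using kf unfolding d_def by auto
  have q'j: "q' j = d" "q' (j+1) = c" unfolding q'_def merge_dist_def d_def c_def a_def b_def by auto
  have q'o: "l \<noteq> j \<Longrightarrow> l \<noteq> j+1 \<Longrightarrow> q' l = q l" for l unfolding q'_def merge_dist_def by auto
  define A where "A = {..<n}"
  define G where "G = A \<rightarrow>\<^sub>E ({1..m} - {j+1})"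
  define S where "S g = {t\<in>A. g t = j}" for g :: "nat \<Rightarrow> nat"
  define \<Phi> where "\<Phi> g T = (\<lambda>t. if t \<in> T then j+1 else g t)" for g :: "nat \<Rightarrow> nat" and T
  define ok where "ok g = (\<forall>l\<in>{j+2..m}. load n g l < k)" for g
  define R where "R g = (\<Prod>t\<in>A - S g. q (g t))" for g
  have split: "{j..m} = {j, j+1} \<union> {j+2..m}" using j1 by auto
  have ev1: "max_load_from n m (\<Phi> g T) j < k \<longleftrightarrow> ok g \<and> card (S g) - card T < k \<and> card T < k"
    if "g \<in> G" "T \<subseteq> S g" for g T
  proof -
    have gG: "g \<in> {..<n} \<rightarrow>\<^sub>E ({1..m} - {j+1})" and TS: "T \<subseteq> {t\<in>{..<n}. g t = j}"
      using that unfolding G_def S_def A_def by auto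
    note ff = fiber_facts[OF gG TS]
    have jm: "j \<le> m" using j1 by simp
    show ?thesis unfolding mlf_less[OF jm] split ok_def
      using ff unfolding S_def A_def \<Phi>_def by auto
  qed
  have ev2: "max_load_from n m (\<Phi> g T) (j+1) < k \<longleftrightarrow> ok g \<and> card T < k"
    if "g \<in> G" "T \<subseteq> S g" for g T
  proof -
    have gG: "g \<in> {..<n} \<rightarrow>\<^sub>E ({1..m} - {j+1})" and TS: "T \<subseteq> {t\<in>{..<n}. g t = j}"
      using that unfolding G_def S_def A_def by auto
    note ff = fiber_facts[OF gG TS]
    have split2: "{j+1..m} = {j+1} \<union> {j+2..m}" using j1 by auto
    show ?thesis unfolding mlf_less[OF j1(2)] split2 ok_def
      using ff unfolding S_def A_def \<Phi>_def by auto
  qed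
  have w1: "(\<Prod>t<n. q (\<Phi> g T t)) = R g * a^(card (S g) - card T) * b^card T"
    if "g \<in> G" "T \<subseteq> S g" for g T
  proof -
    have gG: "g \<in> {..<n} \<rightarrow>\<^sub>E ({1..m} - {j+1})" and TS: "T \<subseteq> {t\<in>{..<n}. g t = j}"
      using that unfolding G_def S_def A_def by auto
    show ?thesis using fiber_facts(1)[OF gG TS, of q] unfolding R_def S_def A_def \<Phi>_def a_def b_def by simp
  qed
  have w2: "(\<Prod>t<n. q' (\<Phi> g T t)) = R g * d^(card (S g) - card T) * c^card T"
    if "g \<in> G" "T \<subseteq> S g" for g T
  proof -
    have gG: "g \<in> {..<n} \<rightarrow>\<^sub>E ({1..m} - {j+1})" and TS: "T \<subseteq> {t\<in>{..<n}. g t = j}"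
      using that unfolding G_def S_def A_def by auto
    have "(\<Prod>t\<in>A - S g. q' (g t)) = R g" unfolding R_def
      using gG by (intro prod.cong refl q'o) (auto simp: S_def A_def PiE_iff)
    then show ?thesis using fiber_facts(1)[OF gG TS, of q'] unfolding S_def A_def \<Phi>_def q'j by simp
  qed
  have R0: "0 \<le> R g" if "g \<in> G" for g
    unfolding R_def using that assms(3) by (intro prod_nonneg) (auto simp: G_def S_def PiE_iff)
  have finS: "finite (S g)" for g unfolding S_def A_def by auto
  have "balls_prob n m q (\<lambda>f. max_load_from n m f j < k)
     = (\<Sum>g\<in>G. \<Sum>T\<in>Pow (S g). if max_load_from n m (\<Phi> g T) j < k then \<Prod>t<n. q (\<Phi> g T t) else 0)"
    unfolding balls_prob_def G_def S_def A_def \<Phi>_def using j1 by (intro decomp) auto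
  also have "\<dots> \<le> (\<Sum>g\<in>G. \<Sum>T\<in>Pow (S g). if max_load_from n m (\<Phi> g T) (j+1) < k then \<Prod>t<n. q' (\<Phi> g T t) else 0)"
  proof (rule sum_mono)
    fix g assume g: "g \<in> G"
    define s where "s = card (S g)"
    define h1 where "h1 i = (if ok g \<and> s - i < k \<and> i < k then R g * a^(s-i) * b^i else 0)" for i
    define h2 where "h2 i = (if ok g \<and> i < k then R g * d^(s-i) * c^i else 0)" for i
    have "(\<Sum>T\<in>Pow (S g). if max_load_from n m (\<Phi> g T) j < k then \<Prod>t<n. q (\<Phi> g T t) else 0)
        = (\<Sum>T\<in>Pow (S g). h1 (card T))"
      using ev1[OF g] w1[OF g] unfolding h1_def s_def by (intro sum.cong) auto
    also have "\<dots> = (\<Sum>i\<le>s. of_nat (s choose i) * h1 i)" unfolding s_def by (rule pow_card_sum[OF finS])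
    also have "\<dots> \<le> (\<Sum>i\<le>s. of_nat (s choose i) * h2 i)"
    proof (cases "ok g")
      case True
      have "(\<Sum>i\<le>s. of_nat (s choose i) * h1 i) = R g * bs s b a (\<lambda>i. i < k \<and> s - i < k)"
        unfolding bs_def sum_distrib_left h1_def using True by (intro sum.cong) (auto simp: algebra_simps)
      also have "\<dots> \<le> R g * bs s c d (\<lambda>i. i < k)"
        using key[OF assms(2) a0 d0(1) d0(4) kf(1) d0(2) d0(3)] R0[OF g] by (rule mult_left_mono)
      also have "\<dots> = (\<Sum>i\<le>s. of_nat (s choose i) * h2 i)"
        unfolding bs_def sum_distrib_left h2_def using True by (intro sum.cong) (auto simp: algebra_simps)
      finally show ?thesis .
    qed (simp add: h1_def h2_def)
    also have "\<dots> = (\<Sum>T\<in>Pow (S g). h2 (card T))" unfolding s_def by (rule pow_card_sum[OF finS, symmetric])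
    also have "\<dots> = (\<Sum>T\<in>Pow (S g). if max_load_from n m (\<Phi> g T) (j+1) < k then \<Prod>t<n. q' (\<Phi> g T t) else 0)"
      using ev2[OF g] w2[OF g] unfolding h2_def s_def by (intro sum.cong) auto
    finally show "(\<Sum>T\<in>Pow (S g). if max_load_from n m (\<Phi> g T) j < k then \<Prod>t<n. q (\<Phi> g T t) else 0)
       \<le> (\<Sum>T\<in>Pow (S g). if max_load_from n m (\<Phi> g T) (j+1) < k then \<Prod>t<n. q' (\<Phi> g T t) else 0)" .
  qed
  also have "\<dots> = balls_prob n m q' (\<lambda>f. max_load_from n m f (j+1) < k)"
    unfolding balls_prob_def G_def S_def A_def \<Phi>_def using j1 by (intro decomp[symmetric]) auto
  finally show ?thesis unfolding q'_def .
qed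

end
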